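(* Let $R$ be a finite commutative local Frobenius ring with residue field $\mathbb{F}_q$, and let $\ell$ be a nonnegative integer. Let $C$ be a linear code over $R$ of length $n$ with generator matrix $\mathrm{G}$ and parity check matrix $\mathrm{H}$. Then $\dim(\texttt{Hull}(C))=\ell$ if and only if $\texttt{Rank}_q(\mathrm{G}\mathrm{G}^\top)=\texttt{Rank}_q(\mathrm{G})-\ell$ or $\texttt{Rank}_q(\mathrm{H}\mathrm{H}^\top)=\texttt{Rank}_q(\mathrm{H})-\ell$.
   Context: A linear code of length $n$ over $R$ is an $R$-submodule of $R^n$; $\dim(C):=\log_q|C|$. $C^\perp$ is the dual with respect to the standard inner product $\sum_j u_jc_j$, and $\texttt{Hull}(C):=C\cap C^\perp$. A generator matrix of $C$ is a matrix whose rows generate $C$; a parity check matrix is a generator matrix of $C^\perp$. For a matrix $\mathrm{A}$ over $R$, $\texttt{Rank}_q(\mathrm{A}):=\log_q|M|$ where $M$ is the $R$-submodule spanned by the rows of $\mathrm{A}$. *)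

theory Defs
  imports Complex_Main
begin

definition is_ideal :: "'a::comm_ring_1 set \<Rightarrow> bool" where
  "is_ideal I \<longleftrightarrow> 0 \<in> I \<and> (\<forall>x\<in>I. \<forall>y\<in>I. x + y \<in> I) \<and> (\<forall>r. \<forall>x\<in>I. r * x \<in> I)"

definition maximal_ideal :: "'a::comm_ring_1 set \<Rightarrow> bool" where
  "maximal_ideal M \<longleftrightarrow> is_ideal M \<and> M \<noteq> UNIV \<and>
     (\<forall>J. is_ideal J \<and> M \<subseteq> J \<and> J \<noteq> UNIV \<longrightarrow> J = M)"

definition minimal_ideal :: "'a::comm_ring_1 set \<Rightarrow> bool" where
  "minimal_ideal I \<longleftrightarrow> is_ideal I \<and> I \<noteq> {0} \<and>
     (\<forall>J. is_ideal J \<and> J \<subseteq> I \<and> J \<noteq> {0} \<longrightarrow> J = I)"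

definition local_ring :: "'a::comm_ring_1 itself \<Rightarrow> bool" where
  "local_ring _ \<longleftrightarrow> (\<exists>!M::'a set. maximal_ideal M)"

text \<open>A finite commutative local ring is Frobenius iff it has a unique minimal ideal.\<close>
definition frobenius_local_ring :: "'a::comm_ring_1 itself \<Rightarrow> bool" where
  "frobenius_local_ring T \<longleftrightarrow> local_ring T \<and> (\<exists>!I::'a set. minimal_ideal I)"

definition max_ideal :: "'a::comm_ring_1 itself \<Rightarrow> 'a set" where
  "max_ideal _ = (THE M. maximal_ideal M)"

definition residue_card :: "'a::comm_ring_1 itself \<Rightarrow> nat" where
  "residue_card T = card {{x + m | m. m \<in> max_ideal T} | x::'a. True}"

section \<open>Linear codes over R, vectors indexed by a finite type 'n (length n = CARD('n))\<close>

definition linear_code :: "('n::finite \<Rightarrow> 'a::comm_ring_1) set \<Rightarrow> bool" where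
  "linear_code C \<longleftrightarrow> (\<lambda>j. 0) \<in> C \<and> (\<forall>u\<in>C. \<forall>v\<in>C. (\<lambda>j. u j + v j) \<in> C) \<and> (\<forall>r. \<forall>u\<in>C. (\<lambda>j. r * u j) \<in> C)"

definition inner_std :: "('n::finite \<Rightarrow> 'a::comm_ring_1) \<Rightarrow> ('n \<Rightarrow> 'a) \<Rightarrow> 'a" where
  "inner_std u v = (\<Sum>j\<in>UNIV. u j * v j)"

definition dual_code :: "('n::finite \<Rightarrow> 'a::comm_ring_1) set \<Rightarrow> ('n \<Rightarrow> 'a) set" where
  "dual_code C = {u. \<forall>c\<in>C. inner_std u c = 0}"

definition code_hull :: "('n::finite \<Rightarrow> 'a::comm_ring_1) set \<Rightarrow> ('n \<Rightarrow> 'a) set" where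
  "code_hull C = C \<inter> dual_code C"

definition dim_q :: "nat \<Rightarrow> ('n::finite \<Rightarrow> 'a::comm_ring_1) set \<Rightarrow> real" where
  "dim_q q C = log (real q) (real (card C))"

definition row_span :: "('k::finite \<Rightarrow> 'n::finite \<Rightarrow> 'a::comm_ring_1) \<Rightarrow> ('n \<Rightarrow> 'a) set" where
  "row_span A = {(\<lambda>j. \<Sum>i\<in>UNIV. c i * A i j) | c. True}"

definition rank_q :: "nat \<Rightarrow> ('k::finite \<Rightarrow> 'n::finite \<Rightarrow> 'a::comm_ring_1) \<Rightarrow> real" where
  "rank_q q A = log (real q) (real (card (row_span A)))"

definition mat_mult_transpose :: "('k::finite \<Rightarrow> 'n::finite \<Rightarrow> 'a::comm_ring_1) \<Rightarrow> ('k \<Rightarrow> 'k \<Rightarrow> 'a)" where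
  "mat_mult_transpose A = (\<lambda>i i'. \<Sum>j\<in>UNIV. A i j * A i' j)"

definition generator_matrix :: "('k::finite \<Rightarrow> 'n::finite \<Rightarrow> 'a::comm_ring_1) \<Rightarrow> ('n \<Rightarrow> 'a) set \<Rightarrow> bool" where
  "generator_matrix G C \<longleftrightarrow> row_span G = C"

definition parity_check_matrix :: "('m::finite \<Rightarrow> 'n::finite \<Rightarrow> 'a::comm_ring_1) \<Rightarrow> ('n \<Rightarrow> 'a) set \<Rightarrow> bool" where
  "parity_check_matrix H C \<longleftrightarrow> row_span H = dual_code C"

end

theory Submission
  imports Defs "HOL-Library.Function_Algebras" "HOL-Library.Product_Plus"
begin

lemma card_fibers:
  assumes "finite A" "\<And>y. y \<in> f ` A \<Longrightarrow> card {x\<in>A. f x = y} = k"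
  shows "card A = k * card (f ` A)"
proof -
  have eq: "A = (\<Union>y\<in>f`A. {x\<in>A. f x = y})" by auto
  have "card (\<Union>y\<in>f`A. {x\<in>A. f x = y}) = (\<Sum>y\<in>f`A. card {x\<in>A. f x = y})"
    by (rule card_UN_disjoint) (use assms(1) in auto)
  also have "\<dots> = (\<Sum>y\<in>f`A. k)" using assms(2) by simp
  finally show ?thesis using eq by simp
qed

lemma hom_card:
  fixes f :: "'b::ab_group_add \<Rightarrow> 'c::ab_group_add"
  assumes fin: "finite A" and add: "\<And>x y. x\<in>A \<Longrightarrow> y\<in>A \<Longrightarrow> x + y \<in> A"
    and neg: "\<And>x. x\<in>A \<Longrightarrow> -x \<in> A"
    and hom: "\<And>x y. x\<in>A \<Longrightarrow> y\<in>A \<Longrightarrow> f (x + y) = f x + f y"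
  shows "card A = card {x\<in>A. f x = 0} * card (f ` A)"
proof (rule card_fibers[OF fin])
  fix y assume "y \<in> f ` A"
  then obtain a where a: "a \<in> A" "y = f a" by auto
  have z: "0 \<in> A" using add[OF a(1) neg[OF a(1)]] by simp
  have f0: "f 0 = 0" using hom[OF z z] by simp
  have fneg: "f (-x) = - f x" if "x \<in> A" for x
    using hom[OF that neg[OF that]] f0 by (metis neg_eq_iff_add_eq_0 add.right_neutral right_minus)
  have "bij_betw (\<lambda>x. x + a) {x\<in>A. f x = 0} {x\<in>A. f x = y}"
  proof (rule bij_betw_imageI)
    show "inj_on (\<lambda>x. x + a) {x \<in> A. f x = 0}" by (auto simp: inj_on_def)
    show "(\<lambda>x. x + a) ` {x \<in> A. f x = 0} = {x \<in> A. f x = y}"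
    proof
      show "(\<lambda>x. x + a) ` {x \<in> A. f x = 0} \<subseteq> {x \<in> A. f x = y}"
        using a add hom by auto
      show "{x \<in> A. f x = y} \<subseteq> (\<lambda>x. x + a) ` {x \<in> A. f x = 0}"
      proof
        fix z assume zz: "z \<in> {x \<in> A. f x = y}"
        have m: "z + - a \<in> A" using add neg a zz by blast
        have "f (z + - a) = 0" using hom[OF _ neg[OF a(1)]] fneg[OF a(1)] zz a by simp
        note m this
        moreover have "z = (z + - a) + a" by simp
        ultimately show "z \<in> (\<lambda>x. x + a) ` {x \<in> A. f x = 0}" by blast
      qed
    qed
  qed
  thus "card {x\<in>A. f x = y} = card {x\<in>A. f x = 0}" by (simp add: bij_betw_same_card)
qed


lemma mem_principal: "y = r * x \<Longrightarrow> y \<in> {r * x | r. True}"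
  by blast

lemma maximal_M:
  assumes "local_ring TYPE('a::{comm_ring_1,finite})"
  shows "maximal_ideal (max_ideal TYPE('a))"
  using assms unfolding local_ring_def max_ideal_def by (metis theI')

lemma M_unique:
  assumes "local_ring TYPE('a::{comm_ring_1,finite})" "maximal_ideal (J::'a set)"
  shows "J = max_ideal TYPE('a)"
  using assms maximal_M[OF assms(1)] unfolding local_ring_def by blast

lemma ideal_in_maximal:
  fixes I :: "'a::{comm_ring_1,finite} set"
  assumes "is_ideal I" "I \<noteq> UNIV"
  shows "\<exists>J. maximal_ideal J \<and> I \<subseteq> J"
proof -
  let ?P = "\<lambda>J::'a set. is_ideal J \<and> I \<subseteq> J \<and> J \<noteq> UNIV"
  have "\<exists>J. ?P J \<and> (\<forall>K. ?P K \<longrightarrow> card K \<le> card J)"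
  proof (rule Lattices_Big.ex_has_greatest_nat[of ?P I card "Suc (card (UNIV::'a set))"])
    show "?P I" using assms by auto
    show "\<forall>y. ?P y \<longrightarrow> card y < Suc (card (UNIV::'a set))"
      by (simp add: card_mono le_imp_less_Suc)
  qed
  then obtain J where J: "?P J" "\<forall>K. ?P K \<longrightarrow> card K \<le> card J" by blast
  have "maximal_ideal J"
    unfolding maximal_ideal_def
  proof (intro conjI allI impI)
    fix K assume K: "is_ideal K \<and> J \<subseteq> K \<and> K \<noteq> UNIV"
    hence "card K \<le> card J" using J by blast
    thus "K = J" using K card_seteq[of K J] by auto
  qed (use J in auto)
  thus ?thesis using J by blast
qed

lemma M_ideal:
  assumes "local_ring TYPE('a::{comm_ring_1,finite})"
  shows "is_ideal (max_ideal TYPE('a))" "max_ideal TYPE('a) \<noteq> UNIV"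
  using maximal_M[OF assms] unfolding maximal_ideal_def by simp_all

lemma one_notin_M:
  assumes "local_ring TYPE('a::{comm_ring_1,finite})"
  shows "(1::'a) \<notin> max_ideal TYPE('a)"
proof
  assume a: "(1::'a) \<in> max_ideal TYPE('a)"
  have S: "\<And>r x. x \<in> max_ideal TYPE('a) \<Longrightarrow> r * x \<in> max_ideal TYPE('a)"
    using M_ideal(1)[OF assms] unfolding is_ideal_def by simp
  have "r \<in> max_ideal TYPE('a)" for r :: 'a using S[OF a, of r] by simp
  hence "max_ideal TYPE('a) = UNIV" by blast
  thus False using M_ideal(2)[OF assms] by simp
qed

lemma nonM_unit:
  assumes loc: "local_ring TYPE('a::{comm_ring_1,finite})" and x: "(x::'a) \<notin> max_ideal TYPE('a)"
  shows "\<exists>y. y * x = 1"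
proof (rule ccontr)
  assume nu: "\<not> (\<exists>y. y * x = 1)"
  let ?I = "{r * x | r. True}"
  have "is_ideal ?I" unfolding is_ideal_def
  proof (intro conjI ballI allI)
    show "0 \<in> ?I" by (rule mem_principal[of _ 0]) simp
    fix a b assume "a \<in> ?I" "b \<in> ?I"
    then obtain r s where "a = r * x" "b = s * x" by blast
    thus "a + b \<in> ?I" by (intro mem_principal[of _ "r + s"]) (simp add: distrib_right)
  next
    fix r a assume "a \<in> ?I"
    then obtain s where "a = s * x" by blast
    thus "r * a \<in> ?I" by (intro mem_principal[of _ "r * s"]) (simp add: mult.assoc)
  qed
  moreover have "?I \<noteq> UNIV"
  proof
    assume "?I = UNIV"
    hence "(1::'a) \<in> ?I" by blast
    then obtain r where "1 = r * x" by blast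
    hence "r * x = 1" by simp
    thus False using nu by blast
  qed
  ultimately obtain J where J: "maximal_ideal J" "?I \<subseteq> J" using ideal_in_maximal by blast
  have "J = max_ideal TYPE('a)" by (rule M_unique[OF loc J(1)])
  moreover have "x \<in> ?I" by (rule mem_principal[of _ 1]) simp
  ultimately show False using J x by blast
qed

lemma ideal_closed:
  assumes "is_ideal I" "x \<in> I" "y \<in> I"
  shows "x + y \<in> I" "r * x \<in> I" "0 \<in> I" "- x \<in> I" "x - y \<in> I"
proof -
  have A: "0 \<in> I" and B: "\<And>a b. a \<in> I \<Longrightarrow> b \<in> I \<Longrightarrow> a + b \<in> I"
    and S: "\<And>s a. a \<in> I \<Longrightarrow> s * a \<in> I"
    using assms(1) unfolding is_ideal_def by blast+
  show "x + y \<in> I" by (rule B[OF assms(2,3)])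
  show "r * x \<in> I" by (rule S[OF assms(2)])
  show "0 \<in> I" by (rule A)
  have "(-1) * x \<in> I" by (rule S[OF assms(2)])
  thus "- x \<in> I" by simp
  have "(-1) * y \<in> I" by (rule S[OF assms(3)])
  hence "- y \<in> I" by simp
  hence "x + (- y) \<in> I" by (rule B[OF assms(2)])
  thus "x - y \<in> I" by simp
qed

definition annM :: "'a::{comm_ring_1,finite} itself \<Rightarrow> 'a set" where
  "annM T = {t. \<forall>m\<in>max_ideal T. m * t = 0}"

lemma principal_minimal:
  assumes loc: "local_ring TYPE('a::{comm_ring_1,finite})"
    and t: "(t::'a) \<in> annM TYPE('a)" "t \<noteq> 0"
  shows "minimal_ideal {r * t | r. True}"
  unfolding minimal_ideal_def
proof (intro conjI allI impI)
  let ?I = "{r * t | r. True}"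
  show "is_ideal ?I" unfolding is_ideal_def
  proof (intro conjI ballI allI)
    show "0 \<in> ?I" by (rule mem_principal[of _ 0]) simp
    fix a b assume "a \<in> ?I" "b \<in> ?I"
    then obtain r s where "a = r * t" "b = s * t" by blast
    thus "a + b \<in> ?I" by (intro mem_principal[of _ "r + s"]) (simp add: distrib_right)
  next
    fix r a assume "a \<in> ?I"
    then obtain s where "a = s * t" by blast
    thus "r * a \<in> ?I" by (intro mem_principal[of _ "r * s"]) (simp add: mult.assoc)
  qed
  have "t \<in> ?I" by (rule mem_principal[of _ 1]) simp
  thus "?I \<noteq> {0}" using t(2) by blast
  fix J assume J: "is_ideal J \<and> J \<subseteq> ?I \<and> J \<noteq> {0}"
  have J0: "0 \<in> J" using J unfolding is_ideal_def by simp
  obtain j where j: "j \<in> J" "j \<noteq> 0" using J J0 by blast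
  then obtain r where r: "j = r * t" using J by blast
  have "r \<notin> max_ideal TYPE('a)" using t(1) r j(2) unfolding annM_def by auto
  then obtain v where v: "v * r = 1" using nonM_unit[OF loc] by blast
  have "t = v * j" using v r by (simp add: mult.assoc[symmetric])
  hence tJ: "t \<in> J" using J j ideal_closed(2)[of J j j v] by simp
  show "J = ?I"
  proof
    show "J \<subseteq> ?I" using J by blast
    show "?I \<subseteq> J"
    proof
      fix y assume "y \<in> ?I"
      then obtain r' where "y = r' * t" by blast
      thus "y \<in> J" using ideal_closed(2)[of J t t r'] J tJ by simp
    qed
  qed
qed

lemma annM_bound:
  assumes frob: "frobenius_local_ring TYPE('a::{comm_ring_1,finite})"
  shows "card (annM TYPE('a)) * card (max_ideal TYPE('a)) \<le> card (UNIV::'a set)"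
proof (cases "annM TYPE('a) \<subseteq> {0}")
  case True
  hence "card (annM TYPE('a)) \<le> card {0::'a}" by (intro card_mono) auto
  hence "card (annM TYPE('a)) \<le> 1" by simp
  moreover have "card (max_ideal TYPE('a)) \<le> card (UNIV::'a set)" by (simp add: card_mono)
  ultimately show ?thesis using mult_le_mono[of "card (annM TYPE('a))" 1 "card (max_ideal TYPE('a))" "card (UNIV::'a set)"] by simp
next
  case False
  have loc: "local_ring TYPE('a)" using frob unfolding frobenius_local_ring_def by blast
  obtain s where s: "s \<in> annM TYPE('a)" "s \<noteq> 0" using False by blast
  have sub: "annM TYPE('a) \<subseteq> {r * s | r. True}"
  proof
    fix t assume t: "t \<in> annM TYPE('a)"
    show "t \<in> {r * s | r. True}"
    proof (cases "t = 0")
      case True thus ?thesis by (intro mem_principal[of _ 0]) simp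
    next
      case False
      have "minimal_ideal {r * t | r. True}" by (rule principal_minimal[OF loc t False])
      moreover have "minimal_ideal {r * s | r. True}" by (rule principal_minimal[OF loc s])
      ultimately have "{r * t | r. True} = {r * s | r. True}"
        using frob unfolding frobenius_local_ring_def by blast
      moreover have "t \<in> {r * t | r. True}" by (rule mem_principal[of _ 1]) simp
      ultimately show ?thesis by simp
    qed
  qed
  have hc: "card (UNIV::'a set) = card {x\<in>UNIV. x * s = 0} * card ((\<lambda>r. r * s) ` UNIV)"
    by (rule hom_card) (auto simp: distrib_right)
  have "max_ideal TYPE('a) \<subseteq> {x\<in>UNIV. x * s = 0}" using s(1) unfolding annM_def by auto
  hence c1: "card (max_ideal TYPE('a)) \<le> card {x\<in>UNIV. x * s = 0}" by (simp add: card_mono)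
  have "annM TYPE('a) \<subseteq> (\<lambda>r. r * s) ` UNIV" using sub by auto
  hence c2: "card (annM TYPE('a)) \<le> card ((\<lambda>r. r * s) ` UNIV)" by (simp add: card_mono)
  have "card (annM TYPE('a)) * card (max_ideal TYPE('a)) \<le> card ((\<lambda>r. r * s) ` UNIV) * card {x\<in>UNIV. x * s = 0}"
    by (rule mult_le_mono[OF c2 c1])
  thus ?thesis using hc by (simp add: mult.commute)
qed


lemma inner_add: "inner_std u (\<lambda>j. a j + b j) = inner_std u a + inner_std u b"
  unfolding inner_std_def by (simp add: distrib_left sum.distrib)
lemma inner_smul: "inner_std u (\<lambda>j. r * a j) = r * inner_std u a"
  unfolding inner_std_def by (simp add: sum_distrib_left algebra_simps)
lemma inner_comm: "inner_std u v = inner_std v u"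
  unfolding inner_std_def by (simp add: mult.commute)
lemma inner_zero: "inner_std u (\<lambda>j. 0) = 0"
  unfolding inner_std_def by simp
lemma inner_plus_fun: "inner_std u (a + b) = inner_std u a + inner_std u b"
  unfolding inner_std_def by (simp add: distrib_left sum.distrib)
lemma inner_plus_fun_left: "inner_std (a + b) u = inner_std a u + inner_std b u"
  unfolding inner_std_def by (simp add: distrib_right sum.distrib)

lemma lc_plus: "linear_code C \<Longrightarrow> x \<in> C \<Longrightarrow> y \<in> C \<Longrightarrow> x + y \<in> C"
  unfolding linear_code_def plus_fun_def by blast
lemma lc_plus': "linear_code C \<Longrightarrow> x \<in> C \<Longrightarrow> y \<in> C \<Longrightarrow> (\<lambda>j. x j + y j) \<in> C"
  unfolding linear_code_def by blast
lemma lc_smul: "linear_code C \<Longrightarrow> x \<in> C \<Longrightarrow> (\<lambda>j. r * x j) \<in> C"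
  unfolding linear_code_def by blast
lemma lc_zero: "linear_code C \<Longrightarrow> (\<lambda>j. 0) \<in> C"
  unfolding linear_code_def by blast
lemma lc_neg: "linear_code C \<Longrightarrow> x \<in> C \<Longrightarrow> - x \<in> C"
proof -
  assume "linear_code C" "x \<in> C"
  hence "(\<lambda>j. (-1) * x j) \<in> C" by (rule lc_smul)
  moreover have "(\<lambda>j. (-1) * x j) = - x" by (rule ext) simp
  ultimately show ?thesis by simp
qed

lemma inner_add_left: "inner_std (\<lambda>j. a j + b j) u = inner_std a u + inner_std b u"
  unfolding inner_std_def by (simp add: distrib_right sum.distrib)
lemma inner_smul_left: "inner_std (\<lambda>j. r * a j) u = r * inner_std a u"
  unfolding inner_std_def by (simp add: sum_distrib_left algebra_simps)
lemma inner_zero_left: "inner_std (\<lambda>j. 0) u = 0"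
  unfolding inner_std_def by simp

lemma dual_lc: "linear_code (dual_code C)"
  unfolding linear_code_def dual_code_def
  by (auto simp: inner_add_left inner_smul_left inner_zero_left)

lemma lower:
  fixes C :: "('n::finite \<Rightarrow> 'a::{comm_ring_1,finite}) set"
  assumes frob: "frobenius_local_ring TYPE('a)" and lc: "linear_code C"
  shows "card (UNIV::('n\<Rightarrow>'a) set) \<le> card C * card (dual_code C)"
  using lc
proof (induction "card C" arbitrary: C rule: less_induct)
  case less
  note lcC = less.prems
  have loc: "local_ring TYPE('a)" using frob unfolding frobenius_local_ring_def by blast
  let ?M = "max_ideal TYPE('a)"
  show ?case
  proof (cases "C = {\<lambda>j. 0}")
    case True
    have "dual_code C = UNIV" using True unfolding dual_code_def by (auto simp: inner_zero)
    thus ?thesis using True by simp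
  next
    case False
    let ?P = "\<lambda>D. linear_code D \<and> D \<subseteq> C \<and> D \<noteq> C"
    have z: "(\<lambda>j. 0) \<in> C" using lc_zero[OF lcC] .
    have "\<exists>D. ?P D \<and> (\<forall>E. ?P E \<longrightarrow> card E \<le> card D)"
    proof (rule Lattices_Big.ex_has_greatest_nat[of ?P "{\<lambda>j. 0}" card "Suc (card C)"])
      show "?P {\<lambda>j. 0}" using z False unfolding linear_code_def by auto
      show "\<forall>y. ?P y \<longrightarrow> card y < Suc (card C)"
        by (simp add: card_mono le_imp_less_Suc)
    qed
    then obtain C' where C': "linear_code C'" "C' \<subseteq> C" "C' \<noteq> C"
      and maxC': "\<And>E. ?P E \<Longrightarrow> card E \<le> card C'" by blast
    obtain x where x: "x \<in> C" "x \<notin> C'" using C' by blast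
    define sp where "sp y = {(\<lambda>j. c j + r * y j) | c r. c \<in> C'}" for y :: "'n \<Rightarrow> 'a"
    have sp_mem: "v \<in> sp y" if "c \<in> C'" "v = (\<lambda>j. c j + r * y j)" for v y c r
      unfolding sp_def using that by blast
    have sp_props: "linear_code (sp y) \<and> sp y \<subseteq> C \<and> C' \<subseteq> sp y \<and> y \<in> sp y" if y: "y \<in> C" for y
    proof (intro conjI)
      show "linear_code (sp y)" unfolding linear_code_def
      proof (intro conjI ballI allI)
        show "(\<lambda>j. 0) \<in> sp y" by (rule sp_mem[OF lc_zero[OF C'(1)], of _ 0]) simp
      next
        fix u v assume "u \<in> sp y" "v \<in> sp y"
        then obtain c1 r1 c2 r2 where "c1 \<in> C'" "c2 \<in> C'" "u = (\<lambda>j. c1 j + r1 * y j)" "v = (\<lambda>j. c2 j + r2 * y j)"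
          unfolding sp_def by blast
        moreover have "(\<lambda>j. c1 j + c2 j) \<in> C'" using calculation C'(1) unfolding linear_code_def by blast
        ultimately have "(\<lambda>j. u j + v j) = (\<lambda>j. (\<lambda>j. c1 j + c2 j) j + (r1 + r2) * y j)"
          "(\<lambda>j. c1 j + c2 j) \<in> C'" by (auto simp: algebra_simps)
        thus "(\<lambda>j. u j + v j) \<in> sp y" using sp_mem by blast
      next
        fix s u assume "u \<in> sp y"
        then obtain c1 r1 where "c1 \<in> C'" "u = (\<lambda>j. c1 j + r1 * y j)"
          unfolding sp_def by blast
        moreover have "(\<lambda>j. s * c1 j) \<in> C'" using calculation C'(1) unfolding linear_code_def by blast
        ultimately have "(\<lambda>j. s * u j) = (\<lambda>j. (\<lambda>j. s * c1 j) j + (s * r1) * y j)"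
          "(\<lambda>j. s * c1 j) \<in> C'" by (auto simp: algebra_simps)
        thus "(\<lambda>j. s * u j) \<in> sp y" using sp_mem by blast
      qed
      show "sp y \<subseteq> C"
      proof
        fix u assume "u \<in> sp y"
        then obtain c1 r1 where "c1 \<in> C'" "u = (\<lambda>j. c1 j + r1 * y j)"
          unfolding sp_def by blast
        moreover have "c1 \<in> C" using calculation C'(2) by blast
        moreover have "(\<lambda>j. r1 * y j) \<in> C" using lc_smul[OF lcC y] .
        ultimately show "u \<in> C" using lcC unfolding linear_code_def by auto
      qed
      show "C' \<subseteq> sp y"
      proof
        fix c assume "c \<in> C'"
        thus "c \<in> sp y" by (rule sp_mem[of _ _ 0]) simp
      qed
      show "y \<in> sp y" by (rule sp_mem[OF lc_zero[OF C'(1)], of _ 1]) simp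
    qed
    have sp_eq: "sp y = C" if y: "y \<in> C" "y \<notin> C'" for y
    proof (rule ccontr)
      assume ne: "sp y \<noteq> C"
      hence "card (sp y) \<le> card C'" using maxC' sp_props[OF y(1)] by blast
      hence "C' = sp y" using card_seteq[of "sp y" C'] sp_props[OF y(1)] by simp
      thus False using sp_props[OF y(1)] y(2) by blast
    qed
    have spx: "sp x = C" using sp_eq x by blast
    have Mx: "(\<lambda>j. m * x j) \<in> C'" if m: "m \<in> ?M" for m
    proof (rule ccontr)
      assume nin: "(\<lambda>j. m * x j) \<notin> C'"
      have inC: "(\<lambda>j. m * x j) \<in> C" using lc_smul[OF lcC x(1)] .
      hence "x \<in> sp (\<lambda>j. m * x j)" using sp_eq[OF inC nin] x by simp
      then obtain c r where c: "c \<in> C'" "x = (\<lambda>j. c j + r * (m * x j))" unfolding sp_def by blast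
      have "(1 - r * m) \<notin> ?M"
      proof
        assume "(1 - r * m) \<in> ?M"
        moreover have "r * m \<in> ?M" using ideal_closed(2)[OF M_ideal(1)[OF loc] m m] .
        ultimately have "(1 - r * m) + r * m \<in> ?M" using ideal_closed(1)[OF M_ideal(1)[OF loc]] by blast
        thus False using one_notin_M[OF loc] by simp
      qed
      then obtain v where v: "v * (1 - r * m) = 1" using nonM_unit[OF loc] by blast
      have "x = (\<lambda>j. v * c j)"
      proof
        fix j
        have "c j = (1 - r * m) * x j" using fun_cong[OF c(2), of j] by (simp add: algebra_simps)
        hence "v * c j = (v * (1 - r * m)) * x j" by (simp add: mult.assoc)
        thus "x j = v * c j" using v by simp
      qed
      hence "x \<in> C'" using lc_smul[OF C'(1) c(1)] by simp
      thus False using x by blast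
    qed
    let ?D' = "dual_code C'" and ?D = "dual_code C"
    let ?f = "\<lambda>u. inner_std u x"
    have Deq: "?D = {u\<in>?D'. ?f u = 0}"
    proof
      show "?D \<subseteq> {u\<in>?D'. ?f u = 0}" using C'(2) x(1) unfolding dual_code_def by auto
      show "{u\<in>?D'. ?f u = 0} \<subseteq> ?D"
      proof
        fix u assume u: "u \<in> {u\<in>?D'. ?f u = 0}"
        show "u \<in> ?D" unfolding dual_code_def
        proof (intro CollectI ballI)
          fix c assume "c \<in> C"
          hence "c \<in> sp x" using spx by simp
          then obtain c1 r where "c1 \<in> C'" "c = (\<lambda>j. c1 j + r * x j)" unfolding sp_def by blast
          thus "inner_std u c = 0" using u unfolding dual_code_def by (simp add: inner_add inner_smul)
        qed
      qed
    qed
    have finD': "finite ?D'" by simp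
    have hc1: "card ?D' = card {u\<in>?D'. ?f u = 0} * card (?f ` ?D')"
      by (rule hom_card) (auto simp: lc_plus[OF dual_lc] lc_neg[OF dual_lc] inner_plus_fun_left)
    have img: "?f ` ?D' \<subseteq> annM TYPE('a)"
    proof
      fix t assume "t \<in> ?f ` ?D'"
      then obtain u where u: "u \<in> ?D'" "t = ?f u" by blast
      show "t \<in> annM TYPE('a)" unfolding annM_def
      proof (intro CollectI ballI)
        fix m assume "m \<in> ?M"
        hence "inner_std u (\<lambda>j. m * x j) = 0" using Mx u(1) unfolding dual_code_def by blast
        thus "m * t = 0" using u(2) by (simp add: inner_smul)
      qed
    qed
    have c_img: "card (?f ` ?D') \<le> card (annM TYPE('a))" using img by (simp add: card_mono)
    have annb: "card (annM TYPE('a)) * card ?M \<le> card (UNIV::'a set)" by (rule annM_bound[OF frob])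
    let ?g = "\<lambda>p::'a \<times> ('n \<Rightarrow> 'a). (\<lambda>j. fst p * x j) + snd p"
    have hc2: "card ((UNIV::'a set) \<times> C') = card {p\<in>UNIV \<times> C'. ?g p = 0} * card (?g ` (UNIV \<times> C'))"
      by (rule hom_card[of "UNIV \<times> C'" ?g]) (auto simp: lc_plus'[OF C'(1)] lc_neg[OF C'(1)] algebra_simps plus_fun_def fun_eq_iff)
    have gimg: "?g ` (UNIV \<times> C') = C"
    proof
      show "?g ` (UNIV \<times> C') \<subseteq> C"
        using C'(2) lc_plus[OF lcC] lc_smul[OF lcC x(1)] by auto
      show "C \<subseteq> ?g ` (UNIV \<times> C')"
      proof
        fix c assume "c \<in> C"
        hence "c \<in> sp x" using spx by simp
        then obtain c1 r where cc: "c1 \<in> C'" "c = (\<lambda>j. c1 j + r * x j)" unfolding sp_def by blast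
        hence "c = ?g (r, c1)" by (auto simp: fun_eq_iff add.commute)
        thus "c \<in> ?g ` (UNIV \<times> C')" using cc(1) by blast
      qed
    qed
    have kern: "card {p\<in>UNIV \<times> C'. ?g p = 0} = card ?M"
    proof -
      have "bij_betw fst {p\<in>UNIV \<times> C'. ?g p = 0} ?M"
      proof (rule bij_betw_imageI)
        show "inj_on fst {p\<in>UNIV \<times> C'. ?g p = 0}"
        proof (rule inj_onI)
          fix p p' assume h: "p \<in> {p\<in>UNIV \<times> C'. ?g p = 0}" "p' \<in> {p\<in>UNIV \<times> C'. ?g p = 0}" "fst p = fst p'"
          have h1: "(\<lambda>j. fst p * x j) + snd p = 0" using h(1) by simp
          have h2: "(\<lambda>j. fst p * x j) + snd p' = 0" using h(2) h(3) by simp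
          have "snd p = - (\<lambda>j. fst p * x j)" using add_eq_0_iff[THEN iffD1, OF h1] .
          moreover have "snd p' = - (\<lambda>j. fst p * x j)" using add_eq_0_iff[THEN iffD1, OF h2] .
          ultimately have "snd p = - (\<lambda>j. fst p * x j)" "snd p' = - (\<lambda>j. fst p * x j)" by simp_all
          thus "p = p'" using \<open>fst p = fst p'\<close> by (simp add: prod_eq_iff)
        qed
        show "fst ` {p\<in>UNIV \<times> C'. ?g p = 0} = ?M"
        proof
          show "fst ` {p\<in>UNIV \<times> C'. ?g p = 0} \<subseteq> ?M"
          proof
            fix r assume "r \<in> fst ` {p\<in>UNIV \<times> C'. ?g p = 0}"
            then obtain c where c: "c \<in> C'" "(\<lambda>j. r * x j) + c = 0" by auto
            hence "(\<lambda>j. r * x j) = - c" by (simp add: eq_neg_iff_add_eq_0)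
            hence rx: "(\<lambda>j. r * x j) \<in> C'" using lc_neg[OF C'(1) c(1)] by simp
            show "r \<in> ?M"
            proof (rule ccontr)
              assume "r \<notin> ?M"
              then obtain v where v: "v * r = 1" using nonM_unit[OF loc] by blast
              have "(\<lambda>j. v * (r * x j)) \<in> C'" using lc_smul[OF C'(1) rx] .
              moreover have "(\<lambda>j. v * (r * x j)) = x" using v by (simp add: mult.assoc[symmetric])
              ultimately show False using x by simp
            qed
          qed
          show "?M \<subseteq> fst ` {p\<in>UNIV \<times> C'. ?g p = 0}"
          proof
            fix m assume m: "m \<in> ?M"
            have "(m, - (\<lambda>j. m * x j)) \<in> {p\<in>UNIV \<times> C'. ?g p = 0}"
              using lc_neg[OF C'(1) Mx[OF m]] by simp
            thus "m \<in> fst ` {p\<in>UNIV \<times> C'. ?g p = 0}" by force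
          qed
        qed
      qed
      thus ?thesis by (rule bij_betw_same_card)
    qed
    have cardpair: "card (UNIV::'a set) * card C' = card ?M * card C"
      using hc2[unfolded gimg kern] gimg kern by (simp add: card_cartesian_product)
    have lt: "card C' < card C" using C' by (simp add: psubset_card_mono)
    have IH: "card (UNIV::('n\<Rightarrow>'a) set) \<le> card C' * card ?D'" using less.hyps[OF lt C'(1)] .
    define N where "N = card (UNIV::('n\<Rightarrow>'a) set)"
    define R where "R = card (UNIV::'a set)"
    define a where "a = card C'"
    define b where "b = card ?D'"
    define d where "d = card ?D"
    define i where "i = card (?f ` ?D')"
    define m where "m = card ?M"
    define c where "c = card C"
    define k where "k = card (annM TYPE('a))"
    have e1: "N \<le> a * b" using IH N_def a_def b_def by simp
    have e2: "b = d * i" using hc1 Deq b_def d_def i_def by simp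
    have e3: "i \<le> k" using c_img i_def k_def by simp
    have e4: "k * m \<le> R" using annb k_def m_def R_def by simp
    have e5: "R * a = m * c" using cardpair R_def a_def m_def c_def by simp
    have Rpos: "R > 0" unfolding R_def by (simp add: card_gt_0_iff)
    have "N * R \<le> a * b * R" using e1 by simp
    also have "\<dots> = (R * a) * d * i" using e2 by (simp add: ac_simps)
    also have "\<dots> = c * d * (i * m)" using e5 by (simp add: ac_simps)
    also have "\<dots> \<le> c * d * (k * m)" using e3 by simp
    also have "\<dots> \<le> c * d * R" using e4 by simp
    finally have "N * R \<le> c * d * R" .
    hence "N \<le> c * d" using Rpos by simp
    thus ?thesis using N_def c_def d_def by simp
  qed
qed


lemma inner_rowcomb:
  "inner_std u (\<lambda>j. \<Sum>i\<in>UNIV. c i * A i j) = (\<Sum>i\<in>UNIV. c i * inner_std u (A i))"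
proof -
  have "inner_std u (\<lambda>j. \<Sum>i\<in>UNIV. c i * A i j) = (\<Sum>j\<in>UNIV. \<Sum>i\<in>UNIV. u j * (c i * A i j))"
    unfolding inner_std_def by (simp add: sum_distrib_left)
  also have "\<dots> = (\<Sum>i\<in>UNIV. \<Sum>j\<in>UNIV. u j * (c i * A i j))"
    by (rule sum.swap)
  also have "\<dots> = (\<Sum>i\<in>UNIV. c i * inner_std u (A i))"
    unfolding inner_std_def by (rule sum.cong) (simp_all add: sum_distrib_left ac_simps)
  finally show ?thesis .
qed

lemma row_in_span: "A i \<in> row_span A"
proof -
  have "A i = (\<lambda>j. \<Sum>i'\<in>UNIV. (if i' = i then 1 else 0) * A i' j)"
  proof (rule ext)
    fix j
    have "(\<Sum>i'\<in>UNIV. (if i' = i then 1 else 0) * A i' j) = (\<Sum>i'\<in>UNIV. if i' = i then A i' j else 0)"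
      by (rule sum.cong) auto
    also have "\<dots> = A i j" by simp
    finally show "A i j = (\<Sum>i'\<in>UNIV. (if i' = i then 1 else 0) * A i' j)" by simp
  qed
  thus ?thesis unfolding row_span_def mem_Collect_eq
    by (intro exI[of _ "\<lambda>i'. if i' = i then 1 else 0"] conjI TrueI)
qed

lemma dual_rowspan: "dual_code (row_span A) = {u. \<forall>i. inner_std u (A i) = 0}"
proof
  show "dual_code (row_span A) \<subseteq> {u. \<forall>i. inner_std u (A i) = 0}"
    using row_in_span unfolding dual_code_def by blast
  show "{u. \<forall>i. inner_std u (A i) = 0} \<subseteq> dual_code (row_span A)"
    unfolding dual_code_def row_span_def by (auto simp: inner_rowcomb)
qed

lemma lc_rowspan: "linear_code (row_span A)"
  unfolding linear_code_def row_span_def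
proof (intro conjI ballI allI)
  show "(\<lambda>j. 0) \<in> {\<lambda>j. \<Sum>i\<in>UNIV. c i * A i j |c. True}"
    by (rule CollectI, rule exI[of _ "\<lambda>i. 0"]) simp
next
  fix u v assume "u \<in> {\<lambda>j. \<Sum>i\<in>UNIV. c i * A i j |c. True}" "v \<in> {\<lambda>j. \<Sum>i\<in>UNIV. c i * A i j |c. True}"
  then obtain c d where "u = (\<lambda>j. \<Sum>i\<in>UNIV. c i * A i j)" "v = (\<lambda>j. \<Sum>i\<in>UNIV. d i * A i j)" by blast
  hence "(\<lambda>j. u j + v j) = (\<lambda>j. \<Sum>i\<in>UNIV. (\<lambda>i. c i + d i) i * A i j)"
    by (simp add: distrib_right sum.distrib)
  thus "(\<lambda>j. u j + v j) \<in> {\<lambda>j. \<Sum>i\<in>UNIV. c i * A i j |c. True}"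
    unfolding mem_Collect_eq by (intro exI[of _ "\<lambda>i. c i + d i"]) simp
next
  fix r u assume "u \<in> {\<lambda>j. \<Sum>i\<in>UNIV. c i * A i j |c. True}"
  then obtain c where "u = (\<lambda>j. \<Sum>i\<in>UNIV. c i * A i j)" by blast
  hence "(\<lambda>j. r * u j) = (\<lambda>j. \<Sum>i\<in>UNIV. (\<lambda>i. r * c i) i * A i j)"
    by (simp add: sum_distrib_left ac_simps)
  thus "(\<lambda>j. r * u j) \<in> {\<lambda>j. \<Sum>i\<in>UNIV. c i * A i j |c. True}"
    unfolding mem_Collect_eq by (intro exI[of _ "\<lambda>i. r * c i"]) simp
qed

lemma T1:
  fixes A :: "'k::finite \<Rightarrow> 'n::finite \<Rightarrow> 'a::{comm_ring_1,finite}"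
  shows "card (UNIV::('n\<Rightarrow>'a) set) = card (dual_code (row_span A)) * card (row_span (\<lambda>j i. A i j))"
proof -
  let ?f = "\<lambda>u::'n\<Rightarrow>'a. (\<lambda>i. \<Sum>j\<in>UNIV. u j * A i j)"
  have hc: "card (UNIV::('n\<Rightarrow>'a) set) = card {u\<in>UNIV. ?f u = 0} * card (?f ` UNIV)"
    by (rule hom_card) (auto simp: fun_eq_iff distrib_right sum.distrib)
  have "{u\<in>UNIV. ?f u = 0} = dual_code (row_span A)"
    unfolding dual_rowspan inner_std_def by (auto simp: fun_eq_iff)
  moreover have "?f ` UNIV = row_span (\<lambda>j i. A i j)"
    unfolding row_span_def by auto
  ultimately show ?thesis using hc by simp
qed

lemma exact:
  fixes A :: "'k::finite \<Rightarrow> 'n::finite \<Rightarrow> 'a::{comm_ring_1,finite}"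
  assumes frob: "frobenius_local_ring TYPE('a)"
  shows "card (row_span A) * card (dual_code (row_span A)) = card (UNIV::('n\<Rightarrow>'a) set)"
proof -
  let ?AT = "\<lambda>j i. A i j"
  have t1: "card (UNIV::('n\<Rightarrow>'a) set) = card (dual_code (row_span A)) * card (row_span ?AT)"
    by (rule T1)
  have t2: "card (UNIV::('k\<Rightarrow>'a) set) = card (dual_code (row_span ?AT)) * card (row_span A)"
    using T1[of ?AT] by simp
  have l1: "card (UNIV::('k\<Rightarrow>'a) set) \<le> card (row_span ?AT) * card (dual_code (row_span ?AT))"
    by (rule lower[OF frob lc_rowspan])
  have l2: "card (UNIV::('n\<Rightarrow>'a) set) \<le> card (row_span A) * card (dual_code (row_span A))"
    by (rule lower[OF frob lc_rowspan])
  have pos: "card (dual_code (row_span ?AT)) > 0"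
    using lc_zero[OF dual_lc] by (auto simp: card_gt_0_iff)
  have "card (dual_code (row_span ?AT)) * card (row_span A) \<le> card (dual_code (row_span ?AT)) * card (row_span ?AT)"
    using t2 l1 by (simp add: mult.commute)
  hence "card (row_span A) \<le> card (row_span ?AT)" using pos by simp
  hence "card (dual_code (row_span A)) * card (row_span A) \<le> card (UNIV::('n\<Rightarrow>'a) set)"
    using t1 by simp
  thus ?thesis using l2 by (simp add: mult.commute)
qed

lemma hull_count:
  fixes A :: "'k::finite \<Rightarrow> 'n::finite \<Rightarrow> 'a::{comm_ring_1,finite}"
  shows "card (row_span A) = card (code_hull (row_span A)) * card (row_span (mat_mult_transpose A))"
proof -
  let ?f = "\<lambda>c::'n\<Rightarrow>'a. (\<lambda>i. inner_std c (A i))"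
  have hc: "card (row_span A) = card {u\<in>row_span A. ?f u = 0} * card (?f ` row_span A)"
    by (rule hom_card) (auto simp: lc_plus[OF lc_rowspan] lc_neg[OF lc_rowspan] fun_eq_iff inner_plus_fun_left)
  have "{u\<in>row_span A. ?f u = 0} = code_hull (row_span A)"
    unfolding code_hull_def dual_rowspan by (auto simp: fun_eq_iff)
  moreover have "?f ` row_span A = row_span (mat_mult_transpose A)"
  proof -
    have "?f (\<lambda>j. \<Sum>i\<in>UNIV. c i * A i j) = (\<lambda>i'. \<Sum>i\<in>UNIV. c i * mat_mult_transpose A i i')" for c
      unfolding mat_mult_transpose_def
      by (simp add: inner_comm[of "\<lambda>j. \<Sum>i\<in>UNIV. c i * A i j"] inner_rowcomb)
        (auto simp: inner_std_def fun_eq_iff mult.commute intro!: sum.cong)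
    note key = this
    show ?thesis
    proof
      show "?f ` row_span A \<subseteq> row_span (mat_mult_transpose A)"
      proof
        fix y assume "y \<in> ?f ` row_span A"
        then obtain c where "y = ?f (\<lambda>j. \<Sum>i\<in>UNIV. c i * A i j)" unfolding row_span_def by blast
        hence "y = (\<lambda>i'. \<Sum>i\<in>UNIV. c i * mat_mult_transpose A i i')" using key by simp
        thus "y \<in> row_span (mat_mult_transpose A)" unfolding row_span_def by blast
      qed
      show "row_span (mat_mult_transpose A) \<subseteq> ?f ` row_span A"
      proof
        fix y assume "y \<in> row_span (mat_mult_transpose A)"
        then obtain c where "y = (\<lambda>i'. \<Sum>i\<in>UNIV. c i * mat_mult_transpose A i i')" unfolding row_span_def by blast
        hence "y = ?f (\<lambda>j. \<Sum>i\<in>UNIV. c i * A i j)" using key by simp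
        moreover have "(\<lambda>j. \<Sum>i\<in>UNIV. c i * A i j) \<in> row_span A" unfolding row_span_def by blast
        ultimately show "y \<in> ?f ` row_span A" by blast
      qed
    qed
  qed
  ultimately show ?thesis using hc by simp
qed

theorem corollary3p13:
  fixes C :: "('n::finite \<Rightarrow> 'a::{comm_ring_1,finite}) set"
    and G :: "'k::finite \<Rightarrow> 'n \<Rightarrow> 'a"
    and H :: "'m::finite \<Rightarrow> 'n \<Rightarrow> 'a"
    and q l :: nat
  assumes "frobenius_local_ring TYPE('a)"
    and "q = residue_card TYPE('a)"
    and "linear_code C"
    and "generator_matrix G C"
    and "parity_check_matrix H C"
  shows "dim_q q (code_hull C) = real l \<longleftrightarrow>
           (rank_q q (mat_mult_transpose G) = rank_q q G - real l \<or>
            rank_q q (mat_mult_transpose H) = rank_q q H - real l)"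
proof -
  have frob: "frobenius_local_ring TYPE('a)" by fact
  have G: "row_span G = C" using assms(4) unfolding generator_matrix_def by simp
  have H: "row_span H = dual_code C" using assms(5) unfolding parity_check_matrix_def by simp
  have eG: "card C * card (dual_code C) = card (UNIV::('n\<Rightarrow>'a) set)" using exact[OF frob, of G] G by simp
  have eH: "card (dual_code C) * card (dual_code (dual_code C)) = card (UNIV::('n\<Rightarrow>'a) set)"
    using exact[OF frob, of H] H by simp
  have posD: "card (dual_code C) > 0" using lc_zero[OF dual_lc] by (auto simp: card_gt_0_iff)
  have "card (dual_code (dual_code C)) = card C" using eG eH posD
    by (metis mult.commute mult_left_cancel less_irrefl)
  moreover have "C \<subseteq> dual_code (dual_code C)" unfolding dual_code_def by (auto simp: inner_comm)
  ultimately have dd: "dual_code (dual_code C) = C" using card_seteq[of "dual_code (dual_code C)" C] by simp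
  have hH: "code_hull (dual_code C) = code_hull C" unfolding code_hull_def dd by blast
  have cG: "card C = card (code_hull C) * card (row_span (mat_mult_transpose G))"
    using hull_count[of G] G by simp
  have cH: "card (dual_code C) = card (code_hull C) * card (row_span (mat_mult_transpose H))"
    using hull_count[of H] H hH by simp
  have p1: "card (code_hull C) > 0"
    using lc_zero[OF assms(3)] lc_zero[OF dual_lc] unfolding code_hull_def by (auto simp: card_gt_0_iff)
  have p2: "card (row_span (mat_mult_transpose G)) > 0" "card (row_span (mat_mult_transpose H)) > 0"
    using lc_zero[OF lc_rowspan] by (auto simp: card_gt_0_iff)
  have rG: "rank_q q G = dim_q q (code_hull C) + rank_q q (mat_mult_transpose G)"
    unfolding rank_q_def dim_q_def using G cG p1 p2 by (simp add: log_mult_pos)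
  have rH: "rank_q q H = dim_q q (code_hull C) + rank_q q (mat_mult_transpose H)"
    unfolding rank_q_def dim_q_def using H cH p1 p2 by (simp add: log_mult_pos)
  show ?thesis using rG rH by linarith
qed

end
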